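(* Let $X$ be a finite dimensional Banach space with $n(X)>0$. Then $X$ has the $\mathbf{L}_{p,p}$-nu.
   Context: Let $X$ be a Banach space over $\mathbb{K}\in\{\mathbb{R},\mathbb{C}\}$, $\mathcal{L}(X)$ the bounded linear operators on $X$. $\Pi(X)=\{(x,x^* )\in S_X\times S_{X^*}: x^*(x)=1\}$; $v(T)=\sup\{|x^*(Tx)|:(x,x^* )\in\Pi(X)\}$; $n(X)=\inf\{v(T): T\in\mathcal{L}(X),\ \|T\|=1\}$. $X$ has the $\mathbf{L}_{p,p}$-nu if for every $\varepsilon>0$ and $(x,x^* )\in\Pi(X)$ there is $\eta(\varepsilon,(x,x^* ))>0$ such that whenever $T\in\mathcal{L}(X)$ with $v(T)=1$ satisfies $|x^*(Tx)|>1-\eta(\varepsilon,(x,x^* ))$, there is $S\in\mathcal{L}(X)$ with $v(S)=1$, $|x^*(Sx)|=1$ and $\|S-T\|<\varepsilon$. *)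

theory Defs
  imports "HOL-Analysis.Analysis"
begin

text \<open>A Banach space over a scalar field K (here K is a real normed field, instantiated
  below with real or complex) is modelled on a type 'a of class banach (which carries the
  norm, addition and the underlying real structure) together with an explicit scalar
  multiplication s by elements of K, compatible with the norm and extending scaleR.\<close>

definition K_normed_space :: "('k::real_normed_field \<Rightarrow> 'a::real_normed_vector \<Rightarrow> 'a) \<Rightarrow> bool" where
  "K_normed_space s \<longleftrightarrow> vector_space s
     \<and> (\<forall>c x. norm (s c x) = norm c * norm x)
     \<and> (\<forall>r x. s (of_real r) x = scaleR r x)"

definition K_finite_dimensional :: "('k::real_normed_field \<Rightarrow> 'a::real_normed_vector \<Rightarrow> 'a) \<Rightarrow> bool" where
  "K_finite_dimensional s \<longleftrightarrow> (\<exists>B. finite B \<and> module.span s B = UNIV)"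

definition K_bounded_op :: "('k::real_normed_field \<Rightarrow> 'a::real_normed_vector \<Rightarrow> 'a) \<Rightarrow> ('a \<Rightarrow> 'a) \<Rightarrow> bool" where
  "K_bounded_op s T \<longleftrightarrow> Vector_Spaces.linear s s T \<and> (\<exists>K. \<forall>x. norm (T x) \<le> norm x * K)"

definition K_bounded_functional :: "('k::real_normed_field \<Rightarrow> 'a::real_normed_vector \<Rightarrow> 'a) \<Rightarrow> ('a \<Rightarrow> 'k) \<Rightarrow> bool" where
  "K_bounded_functional s f \<longleftrightarrow> Vector_Spaces.linear s (*) f \<and> (\<exists>K. \<forall>x. norm (f x) \<le> norm x * K)"

definition PiX :: "('k::real_normed_field \<Rightarrow> 'a::real_normed_vector \<Rightarrow> 'a) \<Rightarrow> ('a \<times> ('a \<Rightarrow> 'k)) set" where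
  "PiX s = {(x, f). norm x = 1 \<and> K_bounded_functional s f \<and> onorm f = 1 \<and> f x = 1}"

definition num_radius :: "('k::real_normed_field \<Rightarrow> 'a::real_normed_vector \<Rightarrow> 'a) \<Rightarrow> ('a \<Rightarrow> 'a) \<Rightarrow> real" where
  "num_radius s T = (SUP p\<in>PiX s. norm (snd p (T (fst p))))"

definition num_index :: "('k::real_normed_field \<Rightarrow> 'a::real_normed_vector \<Rightarrow> 'a) \<Rightarrow> real" where
  "num_index s = (INF T\<in>{T. K_bounded_op s T \<and> onorm T = 1}. num_radius s T)"

definition Lpp_nu :: "('k::real_normed_field \<Rightarrow> 'a::real_normed_vector \<Rightarrow> 'a) \<Rightarrow> bool" where
  "Lpp_nu s \<longleftrightarrow> (\<forall>\<epsilon>>0. \<forall>(x, f)\<in>PiX s. \<exists>\<eta>>0. \<forall>T. K_bounded_op s T \<and> num_radius s T = 1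
      \<and> norm (f (T x)) > 1 - \<eta> \<longrightarrow>
      (\<exists>S. K_bounded_op s S \<and> num_radius s S = 1 \<and> norm (f (S x)) = 1
           \<and> onorm (\<lambda>y. S y - T y) < \<epsilon>))"

end

theory Submission
  imports Defs "HOL-Analysis.Analysis"
begin

lemma BW_span:
  fixes B :: "'a::real_normed_vector set"
  assumes "finite B"
  shows "\<forall>z M. (\<forall>n. z n \<in> span B \<and> norm (z n) \<le> M) \<longrightarrow> (\<exists>(r::nat\<Rightarrow>nat) l. strict_mono r \<and> l \<in> span B \<and> (z \<circ> r) \<longlonglongrightarrow> l)"
  using assms
proof (induction B rule: finite_induct)
  case empty
  show ?case
  proof (intro allI impI)
    fix z :: "nat \<Rightarrow> 'a" and M
    assume "\<forall>n. z n \<in> span {} \<and> norm (z n) \<le> M"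
    then have "z = (\<lambda>n. 0)" by (auto simp: span_empty)
    then have "strict_mono id \<and> 0 \<in> span {} \<and> (z \<circ> id) \<longlonglongrightarrow> 0"
      by (auto simp: strict_mono_def span_zero o_def)
    then show "\<exists>r l. strict_mono r \<and> l \<in> span {} \<and> (z \<circ> r) \<longlonglongrightarrow> l" by blast
  qed
next
  case (insert b B)
  have closedB: "closed (span B)"
    unfolding closed_sequential_limits
  proof (intro allI impI, elim conjE)
    fix x :: "nat \<Rightarrow> 'a" and l
    assume xs: "\<forall>n. x n \<in> span B" and xl: "x \<longlonglongrightarrow> l"
    have "Bseq x" using xl by (intro convergent_imp_Bseq) (auto simp: convergent_def)
    then obtain K where "\<forall>n. norm (x n) \<le> K" by (auto simp: Bseq_def)
    with xs insert.IH obtain r l' where "strict_mono r" "l' \<in> span B" "(x \<circ> r) \<longlonglongrightarrow> l'" by blast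
    moreover have "(x \<circ> r) \<longlonglongrightarrow> l" using xl \<open>strict_mono r\<close> by (rule LIMSEQ_subseq_LIMSEQ)
    ultimately show "l \<in> span B" using LIMSEQ_unique by metis
  qed
  show ?case
  proof (cases "b \<in> span B")
    case True
    then show ?thesis using insert.IH by (simp add: span_redundant)
  next
    case False
    show ?thesis
    proof (intro allI impI)
      fix z :: "nat \<Rightarrow> 'a" and M
      assume zM: "\<forall>n. z n \<in> span (insert b B) \<and> norm (z n) \<le> M"
      have M0: "0 \<le> M" using zM norm_ge_zero order_trans by blast
      define d where "d = infdist b (span B)"
      have d0: "d > 0" unfolding d_def
        using infdist_pos_not_in_closed[OF closedB _ False] span_zero by blast
      have "\<forall>n. \<exists>k. z n - k *\<^sub>R b \<in> span B" using zM span_breakdown_eq by blast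
      then obtain c where c: "\<And>n. z n - c n *\<^sub>R b \<in> span B" by metis
      define y where "y n = z n - c n *\<^sub>R b" for n
      have cb: "\<bar>c n\<bar> \<le> M / d" for n
      proof (cases "c n = 0")
        case True then show ?thesis using M0 d0 by simp
      next
        case False
        define w where "w = (- (1 / c n)) *\<^sub>R y n"
        have "w \<in> span B" unfolding w_def y_def using c span_mul by blast
        then have "d \<le> dist b w" unfolding d_def by (rule infdist_le)
        also have "dist b w = norm (b + (1 / c n) *\<^sub>R y n)" by (simp add: dist_norm w_def)
        also have "b + (1 / c n) *\<^sub>R y n = (1 / c n) *\<^sub>R z n"
          using False by (simp add: y_def algebra_simps)
        also have "norm ((1 / c n) *\<^sub>R z n) = norm (z n) / \<bar>c n\<bar>" by simp
        finally have "d * \<bar>c n\<bar> \<le> norm (z n)" using False by (simp add: field_simps)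
        then have "d * \<bar>c n\<bar> \<le> M" using zM order_trans by blast
        then show ?thesis using d0 by (simp add: field_simps)
      qed
      have "seq_compact (cball (0::real) (M / d))" by (rule compact_imp_seq_compact) simp
      moreover have "\<forall>n. c n \<in> cball 0 (M / d)" using cb by simp
      ultimately obtain c0 r1 where r1: "strict_mono r1" "(c \<circ> r1) \<longlonglongrightarrow> c0"
        by (meson seq_compactE)
      have "\<forall>n. (y \<circ> r1) n \<in> span B \<and> norm ((y \<circ> r1) n) \<le> M + M / d * norm b"
      proof
        fix n
        have "norm (y (r1 n)) \<le> norm (z (r1 n)) + norm (c (r1 n) *\<^sub>R b)"
          unfolding y_def by (rule norm_triangle_ineq4)
        also have "\<dots> \<le> M + M / d * norm b"
          using zM cb[of "r1 n"] mult_right_mono[OF cb[of "r1 n"] norm_ge_zero[of b]] by (intro add_mono) auto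
        finally show "(y \<circ> r1) n \<in> span B \<and> norm ((y \<circ> r1) n) \<le> M + M / d * norm b"
          using c by (simp add: y_def)
      qed
      with insert.IH obtain r2 y0 where r2: "strict_mono r2" "y0 \<in> span B" "((y \<circ> r1) \<circ> r2) \<longlonglongrightarrow> y0"
        by blast
      have "((c \<circ> r1) \<circ> r2) \<longlonglongrightarrow> c0" using r1(2) r2(1) by (rule LIMSEQ_subseq_LIMSEQ)
      then have "(\<lambda>n. ((c \<circ> r1) \<circ> r2) n *\<^sub>R b + ((y \<circ> r1) \<circ> r2) n) \<longlonglongrightarrow> c0 *\<^sub>R b + y0"
        using r2(3) by (intro tendsto_intros)
      moreover have "(\<lambda>n. ((c \<circ> r1) \<circ> r2) n *\<^sub>R b + ((y \<circ> r1) \<circ> r2) n) = z \<circ> (r1 \<circ> r2)"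
        by (auto simp: y_def o_def)
      moreover have "c0 *\<^sub>R b + y0 \<in> span (insert b B)"
        using r2(2) by (meson span_add span_base span_mul insertI1 span_mono subset_insertI subsetD)
      moreover have "strict_mono (r1 \<circ> r2)" using r1(1) r2(1) by (rule strict_mono_o)
      ultimately show "\<exists>r l. strict_mono r \<and> l \<in> span (insert b B) \<and> (z \<circ> r) \<longlonglongrightarrow> l" by metis
    qed
  qed
qed

lemma BW_univ:
  fixes z :: "nat \<Rightarrow> 'a::real_normed_vector" and B0 :: "'a set"
  assumes "finite B0" "span B0 = UNIV" "\<And>n. norm (z n) \<le> M"
  shows "\<exists>(r::nat\<Rightarrow>nat) l. strict_mono r \<and> (z \<circ> r) \<longlonglongrightarrow> l"
  using BW_span[OF assms(1)] assms(2,3) by blast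

lemma seq_compact_cball_fd:
  fixes B0 :: "'a::real_normed_vector set"
  assumes "finite B0" "span B0 = UNIV"
  shows "seq_compact (cball (0::'a) R)"
proof (rule seq_compactI)
  fix f :: "nat \<Rightarrow> 'a" assume f: "\<forall>n. f n \<in> cball 0 R"
  then have "\<And>n. norm (f n) \<le> R" by simp
  then obtain r l where r: "strict_mono r" "(f \<circ> r) \<longlonglongrightarrow> l" using BW_univ[OF assms] by blast
  have "l \<in> cball 0 R"
    using LIMSEQ_le_const2[OF tendsto_norm[OF r(2)]] f by auto
  then show "\<exists>l\<in>cball 0 R. \<exists>r::nat\<Rightarrow>nat. strict_mono r \<and> (f \<circ> r) \<longlonglongrightarrow> l" using r by blast
qed

lemma op_pointwise_subseq:
  fixes T :: "nat \<Rightarrow> 'a::real_normed_vector \<Rightarrow> 'a" and B0 :: "'a set"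
  assumes fin: "finite B0" "span B0 = UNIV" and bl: "\<And>n. bounded_linear (T n)"
    and M: "\<And>n. onorm (T n) \<le> M"
    and B: "finite B"
  shows "\<exists>r::nat\<Rightarrow>nat. strict_mono r \<and> (\<forall>b\<in>B. convergent (\<lambda>n. T (r n) b))"
  using B
proof (induction B rule: finite_induct)
  case empty
  then show ?case by (intro exI[of _ id]) (simp add: strict_mono_def)
next
  case (insert b B)
  then obtain r where r: "strict_mono r" "\<forall>b\<in>B. convergent (\<lambda>n. T (r n) b)" by blast
  have "norm (T (r n) b) \<le> M * norm b" for n
    using onorm[OF bl, of "r n" b] M[of "r n"] by (meson mult_right_mono norm_ge_zero order_trans)
  then obtain r' l where r': "strict_mono r'" "((\<lambda>n. T (r n) b) \<circ> r') \<longlonglongrightarrow> l"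
    using BW_univ[OF fin, of "\<lambda>n. T (r n) b"] by blast
  have "strict_mono (r \<circ> r')" using r(1) r'(1) by (rule strict_mono_o)
  moreover have "\<forall>b'\<in>insert b B. convergent (\<lambda>n. T ((r \<circ> r') n) b')"
  proof
    fix b' assume "b' \<in> insert b B"
    then show "convergent (\<lambda>n. T ((r \<circ> r') n) b')"
    proof
      assume "b' = b" then show ?thesis using r'(2) by (auto simp: convergent_def o_def)
    next
      assume "b' \<in> B"
      then have "convergent ((\<lambda>n. T (r n) b') \<circ> r')" using r(2) r'(1) convergent_subseq_convergent by blast
      then show ?thesis by (simp add: o_def)
    qed
  qed
  ultimately show ?case by blast
qed

lemma op_compact:
  fixes T :: "nat \<Rightarrow> 'a::real_normed_vector \<Rightarrow> 'a" and B0 :: "'a set"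
  assumes fin: "finite B0" "span B0 = UNIV" and bl: "\<And>n. bounded_linear (T n)"
    and M: "\<And>n. onorm (T n) \<le> M"
  shows "\<exists>(r::nat\<Rightarrow>nat) T0. strict_mono r \<and> bounded_linear T0 \<and> (\<forall>y. (\<lambda>n. T (r n) y) \<longlonglongrightarrow> T0 y)
     \<and> (\<lambda>n. onorm (\<lambda>y. T0 y - T (r n) y)) \<longlonglongrightarrow> 0"
proof -
  obtain r where r: "strict_mono r" "\<forall>b\<in>B0. convergent (\<lambda>n. T (r n) b)"
    using op_pointwise_subseq[where T=T and B0=B0 and M=M and B=B0] fin bl M by blast
  have sub: "subspace {x. convergent (\<lambda>n. T (r n) x)}"
    unfolding subspace_def
  proof (intro conjI ballI allI; clarsimp)
    show "convergent (\<lambda>n. T (r n) 0)" using bl by (simp add: linear_simps convergent_const)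
  next
    fix x y assume "convergent (\<lambda>n. T (r n) x)" "convergent (\<lambda>n. T (r n) y)"
    then show "convergent (\<lambda>n. T (r n) (x + y))"
      using bl by (simp add: linear_simps convergent_add)
  next
    fix c x assume "convergent (\<lambda>n. T (r n) x)"
    then show "convergent (\<lambda>n. T (r n) (c *\<^sub>R x))"
      using bl by (simp add: linear_simps) (auto simp: convergent_def intro!: tendsto_scaleR tendsto_const)
  qed
  have conv: "convergent (\<lambda>n. T (r n) x)" for x
    using span_minimal[OF _ sub, of B0] r(2) fin(2) by auto
  define T0 where "T0 x = lim (\<lambda>n. T (r n) x)" for x
  have lim: "(\<lambda>n. T (r n) x) \<longlonglongrightarrow> T0 x" for x
    unfolding T0_def using conv convergent_LIMSEQ_iff by blast
  have M0: "0 \<le> M" using M[of 0] onorm_pos_le[OF bl] order_trans by blast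
  have bT0: "bounded_linear T0"
  proof (rule bounded_linear_intro[where K = M])
    fix x y
    have "(\<lambda>n. T (r n) (x + y)) \<longlonglongrightarrow> T0 x + T0 y"
      using tendsto_add[OF lim[of x] lim[of y]] bl by (simp add: linear_simps)
    then show "T0 (x + y) = T0 x + T0 y" using lim LIMSEQ_unique by blast
  next
    fix c x
    have "(\<lambda>n. T (r n) (c *\<^sub>R x)) \<longlonglongrightarrow> c *\<^sub>R T0 x"
      using tendsto_scaleR[OF tendsto_const lim[of x]] bl by (simp add: linear_simps)
    then show "T0 (c *\<^sub>R x) = c *\<^sub>R T0 x" using lim LIMSEQ_unique by blast
  next
    fix x
    have "norm (T (r n) x) \<le> norm x * M" for n
      using onorm[OF bl, of "r n" x] mult_right_mono[OF M[of "r n"] norm_ge_zero[of x]] by (simp add: mult.commute)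
    then show "norm (T0 x) \<le> norm x * M"
      using LIMSEQ_le_const2[OF tendsto_norm[OF lim[of x]]] by blast
  qed
  define C where "C = M + onorm T0 + 1"
  have C0: "C > 0" unfolding C_def using M0 onorm_pos_le[OF bT0] by simp
  have Lbl: "bounded_linear (\<lambda>y. T0 y - T (r n) y)" for n
    using bT0 bl by (rule bounded_linear_sub)
  have Lb: "norm (T0 w - T (r n) w) \<le> C * norm w" for n w
  proof -
    have "norm (T0 w - T (r n) w) \<le> norm (T0 w) + norm (T (r n) w)" by (rule norm_triangle_ineq4)
    also have "\<dots> \<le> onorm T0 * norm w + M * norm w"
      using onorm[OF bT0, of w] onorm[OF bl, of "r n" w] M[of "r n"]
      by (meson add_mono mult_right_mono norm_ge_zero order_trans)
    also have "\<dots> \<le> C * norm w" unfolding C_def by (simp add: algebra_simps)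
    finally show ?thesis .
  qed
  have unif: "\<exists>N. \<forall>n\<ge>N. onorm (\<lambda>y. T0 y - T (r n) y) \<le> \<delta>" if d: "\<delta> > 0" for \<delta>
  proof -
    have sc: "seq_compact (cball (0::'a) 1)" by (rule seq_compact_cball_fd[OF fin])
    have dC: "\<delta> / (2 * C) > 0" using d C0 by simp
    obtain k where k: "finite k" "k \<subseteq> cball 0 1" "cball (0::'a) 1 \<subseteq> (\<Union>x\<in>k. ball x (\<delta> / (2 * C)))"
      using seq_compact_imp_totally_bounded[OF sc, rule_format, OF dC] by (elim exE conjE) blast
    have "\<forall>y\<in>k. eventually (\<lambda>n. dist (T (r n) y) (T0 y) < \<delta> / 2) sequentially"
    proof
      fix y assume "y \<in> k"
      show "eventually (\<lambda>n. dist (T (r n) y) (T0 y) < \<delta> / 2) sequentially"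
      proof -
        have "\<delta> / 2 > 0" using d by simp
        then show ?thesis using tendsto_iff[THEN iffD1, rule_format, OF lim[of y]] by blast
      qed
    qed
    then have "eventually (\<lambda>n. \<forall>y\<in>k. dist (T (r n) y) (T0 y) < \<delta> / 2) sequentially"
      by (rule eventually_ball_finite[OF k(1)])
    then obtain N where N: "\<And>n y. n \<ge> N \<Longrightarrow> y \<in> k \<Longrightarrow> dist (T (r n) y) (T0 y) < \<delta> / 2"
      by (auto simp: eventually_sequentially)
    have "onorm (\<lambda>y. T0 y - T (r n) y) \<le> \<delta>" if n: "n \<ge> N" for n
    proof (rule onorm_bound)
      show "0 \<le> \<delta>" using d by simp
      have unitb: "norm (T0 w - T (r n) w) \<le> \<delta>" if w: "norm w \<le> 1" for w
      proof -
        have "w \<in> cball 0 1" using w by simp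
        then have "w \<in> (\<Union>x\<in>k. ball x (\<delta> / (2 * C)))" using k(3) by blast
        then obtain y where y: "y \<in> k" "dist y w < \<delta> / (2 * C)" by auto
        have eqw: "T0 w - T (r n) w = (T0 (w - y) - T (r n) (w - y)) + (T0 y - T (r n) y)"
          using linear_simps(2)[OF bT0, of w y] linear_simps(2)[OF bl[of "r n"], of w y] by (simp add: algebra_simps)
        have t1: "norm (T0 w - T (r n) w) \<le> norm (T0 (w - y) - T (r n) (w - y)) + norm (T0 y - T (r n) y)"
          unfolding eqw by (rule norm_triangle_ineq)
        have "dist (T (r n) y) (T0 y) = norm (T0 y - T (r n) y)" by (simp add: dist_norm norm_minus_commute)
        then have t2: "norm (T0 y - T (r n) y) < \<delta> / 2" using N[OF n y(1)] by simp
        have t3: "norm (T0 (w - y) - T (r n) (w - y)) \<le> C * norm (w - y)" by (rule Lb)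
        have "norm (w - y) = dist y w" by (simp add: dist_norm norm_minus_commute)
        then have "C * norm (w - y) \<le> C * (\<delta> / (2 * C))" using y(2) C0 by (intro mult_left_mono) auto
        also have "\<dots> = \<delta> / 2" using C0 by simp
        finally have t4: "C * norm (w - y) \<le> \<delta> / 2" .
        show ?thesis using t1 t2 t3 t4 by linarith
      qed
      show "norm (T0 x - T (r n) x) \<le> \<delta> * norm x" for x
      proof (cases "x = 0")
        case True then show ?thesis using bT0 bl by (simp add: linear_simps)
      next
        case False
        define w where "w = (1 / norm x) *\<^sub>R x"
        have "norm w \<le> 1" using False by (simp add: w_def)
        then have "norm (T0 w - T (r n) w) \<le> \<delta>" by (rule unitb)
        moreover have "T0 x - T (r n) x = norm x *\<^sub>R (T0 w - T (r n) w)"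
        proof -
          have xw: "x = norm x *\<^sub>R w" using False by (simp add: w_def)
          have "T0 x = norm x *\<^sub>R T0 w" "T (r n) x = norm x *\<^sub>R T (r n) w"
            using linear_simps(5)[OF bT0, of "norm x" w] linear_simps(5)[OF bl[of "r n"], of "norm x" w] xw by simp_all
          then show ?thesis by (simp add: scaleR_diff_right)
        qed
        ultimately show ?thesis
          using mult_left_mono[of "norm (T0 w - T (r n) w)" \<delta> "norm x"] by (simp add: mult.commute)
      qed
    qed
    then show ?thesis by blast
  qed
  have "(\<lambda>n. onorm (\<lambda>y. T0 y - T (r n) y)) \<longlonglongrightarrow> 0"
    unfolding lim_sequentially
  proof (intro allI impI)
    fix e :: real assume e: "e > 0"
    then obtain N where N: "\<And>n. n \<ge> N \<Longrightarrow> onorm (\<lambda>y. T0 y - T (r n) y) \<le> e / 2"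
      using unif[of "e/2"] by auto
    show "\<exists>no. \<forall>n\<ge>no. dist (onorm (\<lambda>y. T0 y - T (r n) y)) 0 < e"
    proof (intro exI[of _ N] allI impI)
      fix n assume "n \<ge> N"
      then have "onorm (\<lambda>y. T0 y - T (r n) y) \<le> e / 2" by (rule N)
      moreover have "0 \<le> onorm (\<lambda>y. T0 y - T (r n) y)" by (rule onorm_pos_le[OF Lbl])
      ultimately show "dist (onorm (\<lambda>y. T0 y - T (r n) y)) 0 < e" using e by (simp add: dist_real_def)
    qed
  qed
  then show ?thesis using r(1) bT0 lim by blast
qed

lemma KN_facts:
  fixes s :: "'k::real_normed_field \<Rightarrow> 'a::real_normed_vector \<Rightarrow> 'a"
  assumes "K_normed_space s"
  shows "vector_space s" "\<And>c x. norm (s c x) = norm c * norm x" "\<And>r x. s (of_real r) x = r *\<^sub>R x"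
  using assms unfolding K_normed_space_def by auto

lemma KN_scale_bl:
  fixes s :: "'k::real_normed_field \<Rightarrow> 'a::real_normed_vector \<Rightarrow> 'a"
  assumes KN: "K_normed_space s"
  shows "bounded_linear (s c)"
proof -
  interpret vs: vector_space s by (rule KN_facts(1)[OF KN])
  show ?thesis
  proof (rule bounded_linear_intro[where K = "norm c"])
    fix x y show "s c (x + y) = s c x + s c y" by (rule vs.scale_right_distrib)
  next
    fix r x
    have "s c (r *\<^sub>R x) = s c (s (of_real r) x)" using KN_facts(3)[OF KN] by simp
    also have "\<dots> = s (of_real r) (s c x)" by (simp only: vs.scale_scale mult.commute)
    also have "\<dots> = r *\<^sub>R s c x" by (simp only: KN_facts(3)[OF KN])
    finally show "s c (r *\<^sub>R x) = r *\<^sub>R s c x" .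
  next
    fix x show "norm (s c x) \<le> norm x * norm c" using KN_facts(2)[OF KN] by (simp add: mult.commute)
  qed
qed

lemma bop_bl:
  fixes s :: "'k::real_normed_field \<Rightarrow> 'a::real_normed_vector \<Rightarrow> 'a"
  assumes KN: "K_normed_space s" and T: "K_bounded_op s T"
  shows "bounded_linear T"
proof -
  have lin: "\<And>x y. T (x + y) = T x + T y" "\<And>c x. T (s c x) = s c (T x)"
    using T unfolding K_bounded_op_def Vector_Spaces.linear_iff by auto
  obtain K where K: "\<And>x. norm (T x) \<le> norm x * K" using T unfolding K_bounded_op_def by auto
  show ?thesis
  proof (rule bounded_linear_intro[OF lin(1) _ K])
    fix r x
    show "T (r *\<^sub>R x) = r *\<^sub>R T x"
      using lin(2)[of "of_real r" x] KN_facts(3)[OF KN] by simp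
  qed
qed

lemma bfun_bl:
  fixes s :: "'k::real_normed_field \<Rightarrow> 'a::real_normed_vector \<Rightarrow> 'a"
  assumes KN: "K_normed_space s" and F: "K_bounded_functional s f"
  shows "bounded_linear f"
proof -
  have lin: "\<And>x y. f (x + y) = f x + f y" "\<And>c x. f (s c x) = c * f x"
    using F unfolding K_bounded_functional_def Vector_Spaces.linear_iff by auto
  obtain K where K: "\<And>x. norm (f x) \<le> norm x * K" using F unfolding K_bounded_functional_def by auto
  show ?thesis
  proof (rule bounded_linear_intro[OF lin(1) _ K])
    fix r x
    show "f (r *\<^sub>R x) = r *\<^sub>R f x"
      using lin(2)[of "of_real r" x] KN_facts(3)[OF KN] by (simp add: scaleR_conv_of_real)
  qed
qed

lemma PiX_D:
  assumes KN: "K_normed_space s" and p: "(x, f) \<in> PiX s"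
  shows "norm x = 1" "bounded_linear f" "onorm f = 1" "f x = 1"
  using p bfun_bl[OF KN] unfolding PiX_def by auto

lemma term_bound:
  assumes KN: "K_normed_space s" and p: "(x, f) \<in> PiX s" and T: "bounded_linear T"
  shows "norm (f (T x)) \<le> onorm T"
proof -
  have "norm (f (T x)) \<le> onorm f * norm (T x)" by (rule onorm[OF PiX_D(2)[OF KN p]])
  also have "\<dots> = norm (T x)" using PiX_D(3)[OF KN p] by simp
  also have "\<dots> \<le> onorm T * norm x" by (rule onorm[OF T])
  also have "\<dots> = onorm T" using PiX_D(1)[OF KN p] by simp
  finally show ?thesis .
qed

lemma nr_upper:
  assumes KN: "K_normed_space s" and p: "(x, f) \<in> PiX s" and T: "bounded_linear T"
  shows "norm (f (T x)) \<le> num_radius s T"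
proof -
  have "bdd_above ((\<lambda>p. norm (snd p (T (fst p)))) ` PiX s)"
    using term_bound[OF KN _ T] by (intro bdd_aboveI[where M = "onorm T"]) auto
  then show ?thesis unfolding num_radius_def using cSUP_upper[OF p] by fastforce
qed

lemma nr_le:
  assumes "PiX s \<noteq> {}" and "\<And>x f. (x, f) \<in> PiX s \<Longrightarrow> norm (f (T x)) \<le> c"
  shows "num_radius s T \<le> c"
  unfolding num_radius_def using assms by (intro cSUP_least) auto

lemma nr_lip:
  assumes KN: "K_normed_space s" and ne: "PiX s \<noteq> {}" and T: "bounded_linear T" and S: "bounded_linear S"
  shows "num_radius s T \<le> num_radius s S + onorm (\<lambda>y. T y - S y)"
proof (rule nr_le[OF ne])
  fix x f assume p: "(x, f) \<in> PiX s"
  have fl: "bounded_linear f" by (rule PiX_D(2)[OF KN p])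
  have "f (T x) = f (S x) + f (T x - S x)" using linear_simps(1)[OF fl, of "S x" "T x - S x"] by simp
  then have "norm (f (T x)) \<le> norm (f (S x)) + norm (f (T x - S x))" by (metis norm_triangle_ineq)
  also have "\<dots> \<le> num_radius s S + onorm (\<lambda>y. T y - S y)"
    using nr_upper[OF KN p S] term_bound[OF KN p bounded_linear_sub[OF T S]] by (intro add_mono) auto
  finally show "norm (f (T x)) \<le> num_radius s S + onorm (\<lambda>y. T y - S y)" .
qed

lemma nr_nonneg:
  assumes KN: "K_normed_space s" and ne: "PiX s \<noteq> {}" and T: "bounded_linear T"
  shows "0 \<le> num_radius s T"
proof -
  obtain x f where "(x, f) \<in> PiX s" using ne by auto
  from nr_upper[OF KN this T] show ?thesis by (meson norm_ge_zero order_trans)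
qed

lemma index_bound:
  fixes s :: "'k::real_normed_field \<Rightarrow> 'a::real_normed_vector \<Rightarrow> 'a"
  assumes KN: "K_normed_space s" and ne: "PiX s \<noteq> {}" and T: "K_bounded_op s T"
  shows "num_index s * onorm T \<le> num_radius s T"
proof -
  interpret vs: vector_space s by (rule KN_facts(1)[OF KN])
  have Tb: "bounded_linear T" by (rule bop_bl[OF KN T])
  show ?thesis
  proof (cases "onorm T = 0")
    case True then show ?thesis using nr_nonneg[OF KN ne Tb] by simp
  next
    case False
    define t where "t = onorm T"
    have t0: "t > 0" using False onorm_pos_le[OF Tb] unfolding t_def by simp
    define T' where "T' y = (1 / t) *\<^sub>R T y" for y
    have lin: "\<And>x y. T (x + y) = T x + T y" "\<And>c x. T (s c x) = s c (T x)"
      using T unfolding K_bounded_op_def Vector_Spaces.linear_iff by auto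
    have T'b: "bounded_linear T'" unfolding T'_def by (intro bounded_linear_compose[OF bounded_linear_scaleR_right Tb])
    have "K_bounded_op s T'"
      unfolding K_bounded_op_def Vector_Spaces.linear_iff
    proof (intro conjI allI)
      show "vector_space s" by (rule KN_facts(1)[OF KN])
      show "vector_space s" by (rule KN_facts(1)[OF KN])
      show "T' (x + y) = T' x + T' y" for x y using linear_simps(1)[OF T'b] by simp
      show "T' (s c x) = s c (T' x)" for c x
      proof -
        have "T' (s c x) = s (of_real (1 / t)) (s c (T x))" unfolding T'_def lin(2) by (simp only: KN_facts(3)[OF KN])
        also have "\<dots> = s c (s (of_real (1 / t)) (T x))" by (simp only: vs.scale_scale mult.commute)
        also have "\<dots> = s c (T' x)" unfolding T'_def by (simp only: KN_facts(3)[OF KN])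
        finally show ?thesis .
      qed
      show "\<exists>K. \<forall>x. norm (T' x) \<le> norm x * K"
        using bounded_linear.bounded[OF T'b] by blast
    qed
    moreover have "onorm T' = 1" unfolding T'_def using onorm_scaleR[OF Tb, of "1/t"] t0 t_def by simp
    ultimately have "T' \<in> {T. K_bounded_op s T \<and> onorm T = 1}" by simp
    moreover have "bdd_below (num_radius s ` {T. K_bounded_op s T \<and> onorm T = 1})"
      using nr_nonneg[OF KN ne bop_bl[OF KN]] by (intro bdd_belowI[where m = 0]) auto
    ultimately have "num_index s \<le> num_radius s T'" unfolding num_index_def by (blast intro: cINF_lower)
    also have "num_radius s T' \<le> num_radius s T / t"
    proof (rule nr_le[OF ne])
      fix x f assume p: "(x, f) \<in> PiX s"
      have "norm (f (T' x)) = norm (f (T x)) / t"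
        unfolding T'_def using linear_simps(5)[OF PiX_D(2)[OF KN p]] t0 by simp
      also have "\<dots> \<le> num_radius s T / t" using nr_upper[OF KN p Tb] t0 by (simp add: divide_right_mono)
      finally show "norm (f (T' x)) \<le> num_radius s T / t" .
    qed
    finally show ?thesis using t0 unfolding t_def by (simp add: field_simps)
  qed
qed

lemma limit_bop:
  fixes s :: "'k::real_normed_field \<Rightarrow> 'a::real_normed_vector \<Rightarrow> 'a"
  assumes KN: "K_normed_space s" and T: "\<And>n. K_bounded_op s (T n)"
    and T0: "bounded_linear T0" and lim: "\<And>y. (\<lambda>n. T n y) \<longlonglongrightarrow> T0 y"
  shows "K_bounded_op s T0"
  unfolding K_bounded_op_def Vector_Spaces.linear_iff
proof (intro conjI allI)
  show "vector_space s" by (rule KN_facts(1)[OF KN])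
  show "vector_space s" by (rule KN_facts(1)[OF KN])
  show "T0 (x + y) = T0 x + T0 y" for x y by (rule linear_simps(1)[OF T0])
  show "T0 (s c x) = s c (T0 x)" for c x
  proof -
    have "(\<lambda>n. s c (T n x)) \<longlonglongrightarrow> s c (T0 x)"
      by (rule bounded_linear.tendsto[OF KN_scale_bl[OF KN] lim])
    moreover have "(\<lambda>n. T n (s c x)) = (\<lambda>n. s c (T n x))"
      using T unfolding K_bounded_op_def Vector_Spaces.linear_iff by auto
    ultimately show ?thesis using lim[of "s c x"] LIMSEQ_unique by metis
  qed
  show "\<exists>K. \<forall>x. norm (T0 x) \<le> norm x * K" using bounded_linear.bounded[OF T0] by blast
qed

lemma main_generic:
  fixes s :: "'k::real_normed_field \<Rightarrow> 'a::real_normed_vector \<Rightarrow> 'a" and B0 :: "'a set"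
  assumes KN: "K_normed_space s" and fin: "finite B0" "span B0 = UNIV" and idx: "num_index s > 0"
  shows "Lpp_nu s"
  unfolding Lpp_nu_def
proof (intro allI impI ballI)
  fix \<epsilon> :: real and p assume e: "\<epsilon> > 0" and p: "p \<in> PiX s"
  obtain x f where pxf: "p = (x, f)" by fastforce
  have xf: "(x, f) \<in> PiX s" using p pxf by simp
  have ne: "PiX s \<noteq> {}" using p by auto
  have fl: "bounded_linear f" by (rule PiX_D(2)[OF KN xf])
  let ?Good = "\<lambda>T. \<exists>S. K_bounded_op s S \<and> num_radius s S = 1 \<and> norm (f (S x)) = 1 \<and> onorm (\<lambda>y. S y - T y) < \<epsilon>"
  have "\<exists>\<eta>>0. \<forall>T. K_bounded_op s T \<and> num_radius s T = 1 \<and> norm (f (T x)) > 1 - \<eta> \<longrightarrow> ?Good T"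
  proof (rule ccontr)
    assume "\<not> ?thesis"
    then have nE: "\<forall>\<eta>>0. \<exists>T. K_bounded_op s T \<and> num_radius s T = 1 \<and> norm (f (T x)) > 1 - \<eta> \<and> \<not> ?Good T"
      by blast
    have "\<forall>n::nat. \<exists>T. K_bounded_op s T \<and> num_radius s T = 1 \<and> norm (f (T x)) > 1 - inverse (real (Suc n)) \<and> \<not> ?Good T"
    proof
      fix n :: nat
      have "inverse (real (Suc n)) > 0" by simp
      then show "\<exists>T. K_bounded_op s T \<and> num_radius s T = 1 \<and> norm (f (T x)) > 1 - inverse (real (Suc n)) \<and> \<not> ?Good T"
        using nE by blast
    qed
    from choice[OF this] obtain T where TT: "\<forall>n. K_bounded_op s (T n) \<and> num_radius s (T n) = 1 \<and> norm (f (T n x)) > 1 - inverse (real (Suc n)) \<and> \<not> ?Good (T n)"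
      by blast
    have T: "\<And>n. K_bounded_op s (T n)" "\<And>n. num_radius s (T n) = 1"
      "\<And>n. norm (f (T n x)) > 1 - inverse (real (Suc n))" "\<And>n. \<not> ?Good (T n)"
      using TT by auto
    have Tb: "bounded_linear (T n)" for n by (rule bop_bl[OF KN T(1)])
    have Tn: "onorm (T n) \<le> 1 / num_index s" for n
      using index_bound[OF KN ne T(1)[of n]] T(2)[of n] idx by (simp add: field_simps)
    obtain r T0 where r: "strict_mono r" "bounded_linear T0" "\<And>y. (\<lambda>n. T (r n) y) \<longlonglongrightarrow> T0 y"
      "(\<lambda>n. onorm (\<lambda>y. T0 y - T (r n) y)) \<longlonglongrightarrow> 0"
      using op_compact[of B0 T "1 / num_index s"] fin Tb Tn by blast
    define D where "D n = onorm (\<lambda>y. T0 y - T (r n) y)" for n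
    have D: "D \<longlonglongrightarrow> 0" using r(4) unfolding D_def by simp
    have Dsym: "onorm (\<lambda>y. T (r n) y - T0 y) = D n" for n
    proof -
      have "(\<lambda>y. T (r n) y - T0 y) = (\<lambda>y. - (T0 y - T (r n) y))" by auto
      then show ?thesis unfolding D_def using onorm_neg[of "\<lambda>y. T0 y - T (r n) y"] by simp
    qed
    have T0op: "K_bounded_op s T0"
      by (rule limit_bop[OF KN _ r(2) r(3)]) (rule T(1))
    have v1: "\<bar>num_radius s T0 - 1\<bar> \<le> D n" for n
      using nr_lip[OF KN ne r(2) Tb[of "r n"]] nr_lip[OF KN ne Tb[of "r n"] r(2)] T(2)[of "r n"] Dsym[of n]
      unfolding D_def by linarith
    have "\<bar>num_radius s T0 - 1\<bar> \<le> 0" using LIMSEQ_le_const[OF D] v1 by blast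
    then have vT0: "num_radius s T0 = 1" by simp
    have up: "norm (f (T0 x)) \<le> 1" using nr_upper[OF KN xf r(2)] vT0 by simp
    have lo: "1 - norm (f (T0 x)) \<le> inverse (real (Suc n)) + D n" for n
    proof -
      have eq: "f (T (r n) x) = f (T0 x) + f (T (r n) x - T0 x)" using linear_simps(1)[OF fl, of "T0 x" "T (r n) x - T0 x"] by simp
      have "norm (f (T (r n) x)) \<le> norm (f (T0 x)) + norm (f (T (r n) x - T0 x))" unfolding eq by (rule norm_triangle_ineq)
      moreover have "norm (f (T (r n) x - T0 x)) \<le> D n"
        using term_bound[OF KN xf bounded_linear_sub[OF Tb[of "r n"] r(2)]] Dsym[of n] by simp
      moreover have "inverse (real (Suc (r n))) \<le> inverse (real (Suc n))"
        using seq_suble[OF r(1), of n] by (simp add: le_imp_inverse_le)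
      ultimately show ?thesis using T(3)[of "r n"] by linarith
    qed
    have "(\<lambda>n. inverse (real (Suc n)) + D n) \<longlonglongrightarrow> 0 + 0"
      by (intro tendsto_add LIMSEQ_inverse_real_of_nat D)
    then have "(\<lambda>n. inverse (real (Suc n)) + D n) \<longlonglongrightarrow> 0" by simp
    then have "1 - norm (f (T0 x)) \<le> 0" using lo by (intro LIMSEQ_le_const[of _ 0]) auto
    with up have fT0: "norm (f (T0 x)) = 1" by simp
    have "eventually (\<lambda>n. D n < \<epsilon>) sequentially" using order_tendstoD(2)[OF D e] .
    then obtain n where "D n < \<epsilon>" by (auto simp: eventually_sequentially)
    then have "?Good (T (r n))" using T0op vT0 fT0 unfolding D_def by blast
    with T(4) show False by blast
  qed
  then show "case p of (x, f) \<Rightarrow> \<exists>\<eta>>0. \<forall>T. K_bounded_op s T \<and> num_radius s T = 1 \<and> 1 - \<eta> < norm (f (T x)) \<longrightarrow>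
           (\<exists>S. K_bounded_op s S \<and> num_radius s S = 1 \<and> norm (f (S x)) = 1 \<and> onorm (\<lambda>y. S y - T y) < \<epsilon>)"
    using pxf by simp
qed

lemma real_case_scale:
  fixes sR :: "real \<Rightarrow> 'a::real_normed_vector \<Rightarrow> 'a"
  assumes KN: "K_normed_space sR"
  shows "sR = scaleR"
proof (intro ext)
  fix r x show "sR r x = r *\<^sub>R x" using KN_facts(3)[OF KN, of r x] by simp
qed

lemma complex_fd:
  fixes sC :: "complex \<Rightarrow> 'b::real_normed_vector \<Rightarrow> 'b"
  assumes KN: "K_normed_space sC" and sp: "module.span sC B = UNIV"
  shows "span (B \<union> sC \<i> ` B) = UNIV"
proof -
  interpret vs: vector_space sC by (rule KN_facts(1)[OF KN])
  define S' where "S' = span (B \<union> sC \<i> ` B)"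
  have ofr: "\<And>r x. sC (of_real r) x = r *\<^sub>R x" by (rule KN_facts(3)[OF KN])
  have baseB: "sC c b \<in> S'" if b: "b \<in> B" for b c
  proof -
    have "c = complex_of_real (Re c) + complex_of_real (Im c) * \<i>" by (simp add: complex_eq_iff)
    then have "sC c b = sC (complex_of_real (Re c)) b + sC (complex_of_real (Im c)) (sC \<i> b)"
      by (metis vs.scale_left_distrib vs.scale_scale)
    also have "\<dots> = Re c *\<^sub>R b + Im c *\<^sub>R (sC \<i> b)" by (simp only: ofr)
    finally show ?thesis unfolding S'_def using b
      by (simp add: span_add span_mul span_base)
  qed
  have base: "sC c z \<in> S'" if z: "z \<in> B \<union> sC \<i> ` B" for z c
  proof (cases "z \<in> B")
    case True then show ?thesis by (rule baseB)
  next
    case False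
    then obtain b where b: "b \<in> B" "z = sC \<i> b" using z by auto
    then have "sC c z = sC (c * \<i>) b" by simp
    then show ?thesis using baseB[OF b(1)] by simp
  qed
  have all: "\<forall>c. sC c y \<in> S'" if y: "y \<in> span (B \<union> sC \<i> ` B)" for y
    using y
  proof (induction rule: span_induct_alt)
    case base then show ?case by (simp add: span_zero S'_def)
  next
    case (step a x y)
    show ?case
    proof
      fix c
      have "sC c (a *\<^sub>R x + y) = sC (c * of_real a) x + sC c y"
        by (simp only: vs.scale_right_distrib ofr[symmetric] vs.scale_scale)
      moreover have "sC (c * of_real a) x \<in> S'" using base[OF step(1)] .
      moreover have "sC c y \<in> S'" using step(2) by blast
      ultimately show "sC c (a *\<^sub>R x + y) \<in> S'" unfolding S'_def by (simp add: span_add)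
    qed
  qed
  have "vs.subspace S'"
    unfolding vs.subspace_def using all unfolding S'_def by (auto simp: span_zero span_add)
  moreover have "B \<subseteq> S'" unfolding S'_def by (auto intro: span_base)
  ultimately have "module.span sC B \<subseteq> S'" using vs.span_minimal by blast
  then show ?thesis using sp unfolding S'_def by auto
qed

theorem proposition3p3:
  fixes sR :: "real \<Rightarrow> 'a::banach \<Rightarrow> 'a"
    and sC :: "complex \<Rightarrow> 'b::banach \<Rightarrow> 'b"
  shows "(K_normed_space sR \<and> K_finite_dimensional sR \<and> num_index sR > 0 \<longrightarrow> Lpp_nu sR)
       \<and> (K_normed_space sC \<and> K_finite_dimensional sC \<and> num_index sC > 0 \<longrightarrow> Lpp_nu sC)"
proof (intro conjI impI; elim conjE)
  assume KN: "K_normed_space sR" and FD: "K_finite_dimensional sR" and idx: "num_index sR > 0"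
  obtain B where B: "finite B" "module.span sR B = UNIV" using FD unfolding K_finite_dimensional_def by blast
  have "span B = UNIV" using B(2) unfolding real_case_scale[OF KN] by (simp add: span_raw_def)
  then show "Lpp_nu sR" using main_generic[OF KN B(1) _ idx] by blast
next
  assume KN: "K_normed_space sC" and FD: "K_finite_dimensional sC" and idx: "num_index sC > 0"
  obtain B where B: "finite B" "module.span sC B = UNIV" using FD unfolding K_finite_dimensional_def by blast
  have "span (B \<union> sC \<i> ` B) = UNIV" by (rule complex_fd[OF KN B(2)])
  moreover have "finite (B \<union> sC \<i> ` B)" using B(1) by simp
  ultimately show "Lpp_nu sC" using main_generic[OF KN _ _ idx] by blast
qed

end
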